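(* Let $n\ge2$, $A_0,\dots,A_{n-1}\in\mathbb{R}$, $A_n=1$, $F(a)=\sum_{k=0}^nA_ka^k$. Let $x(a)$ be a smooth function on an open interval $I\subset(0,\infty)$ with $\dot x\neq 0$, and on $I\times\mathbb{R}$ let $H=\Pi^2+aP_y^2$, $\Pi=\frac{a}{\dot x}P_a$, $G=\sum_{k=0}^nA_kH^kP_y^{2(n-k)}$. Let $$Q_1=\sum_{k=1}^n b_k(a)\,\Pi^{2k-1}P_y^{2(n-k)+1}$$ with smooth functions $b_k$ of $a$, and $S_1=Q_1+yG$. Then $\{H,S_1\}=0$ if and only if, for every $k\in\{1,\dots,n\}$, $$b_k=\sum_{s=1}^k\frac{F^{(k-s)}}{(k-s)!}\,\frac{D_a^s x}{(1/2)_s}=\mathrm{Op}_k[F]x-\frac{F^{(k)}}{k!}\,x,$$ and $x$, after adding a suitable constant (which does not change $H$), satisfies the linear homogeneous ODE of order $n$ $$\mathrm{Op}_n[F]\,x=0 .$$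
   Context: $D_a=d/da$, $F^{(m)}=D_a^mF$, a dot denotes $d/da$; $\{\cdot,\cdot\}$ is the canonical Poisson bracket with $(P_a,P_y)$ conjugate to $(a,y)$. Pochhammer symbol: $(z)_0=1$, $(z)_s=z(z+1)\cdots(z+s-1)$. For a polynomial $F$ and integer $m\ge0$, the linear differential operator $\mathrm{Op}_m[F]=\sum_{s=0}^m\frac{F^{(m-s)}}{(m-s)!}\frac{1}{(1/2)_s}D_a^s$. *)

theory Defs
  imports "HOL-Analysis.Analysis"
begin

definition smooth_real_on :: "real set \<Rightarrow> (real \<Rightarrow> real) \<Rightarrow> bool" where
  "smooth_real_on I f \<longleftrightarrow> (\<forall>k. \<forall>t\<in>I. ((deriv ^^ k) f) field_differentiable (at t))"

text \<open>Phase-space functions are written as functions of (a, y, P_a, P_y).\<close>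

definition poisson ::
  "(real \<Rightarrow> real \<Rightarrow> real \<Rightarrow> real \<Rightarrow> real) \<Rightarrow> (real \<Rightarrow> real \<Rightarrow> real \<Rightarrow> real \<Rightarrow> real)
     \<Rightarrow> real \<Rightarrow> real \<Rightarrow> real \<Rightarrow> real \<Rightarrow> real" where
  "poisson f g a y pa py =
     deriv (\<lambda>t. f t y pa py) a * deriv (\<lambda>t. g a y t py) pa
   - deriv (\<lambda>t. f a y t py) pa * deriv (\<lambda>t. g t y pa py) a
   + deriv (\<lambda>t. f a t pa py) y * deriv (\<lambda>t. g a y pa t) py
   - deriv (\<lambda>t. f a y pa t) py * deriv (\<lambda>t. g a t pa py) y"

definition Pi_fun :: "(real \<Rightarrow> real) \<Rightarrow> real \<Rightarrow> real \<Rightarrow> real" where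
  "Pi_fun x a pa = a / deriv x a * pa"

definition H_fun :: "(real \<Rightarrow> real) \<Rightarrow> real \<Rightarrow> real \<Rightarrow> real \<Rightarrow> real \<Rightarrow> real" where
  "H_fun x a y pa py = (Pi_fun x a pa)^2 + a * py^2"

definition G_fun :: "nat \<Rightarrow> (nat \<Rightarrow> real) \<Rightarrow> (real \<Rightarrow> real) \<Rightarrow> real \<Rightarrow> real \<Rightarrow> real \<Rightarrow> real \<Rightarrow> real" where
  "G_fun n A x a y pa py = (\<Sum>k\<le>n. A k * (H_fun x a y pa py)^k * py^(2*(n-k)))"

definition Q1_fun :: "nat \<Rightarrow> (nat \<Rightarrow> real \<Rightarrow> real) \<Rightarrow> (real \<Rightarrow> real) \<Rightarrow> real \<Rightarrow> real \<Rightarrow> real \<Rightarrow> real \<Rightarrow> real" where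
  "Q1_fun n b x a y pa py = (\<Sum>k=1..n. b k a * (Pi_fun x a pa)^(2*k-1) * py^(2*(n-k)+1))"

definition S1_fun :: "nat \<Rightarrow> (nat \<Rightarrow> real) \<Rightarrow> (nat \<Rightarrow> real \<Rightarrow> real) \<Rightarrow> (real \<Rightarrow> real)
     \<Rightarrow> real \<Rightarrow> real \<Rightarrow> real \<Rightarrow> real \<Rightarrow> real" where
  "S1_fun n A b x a y pa py = Q1_fun n b x a y pa py + y * G_fun n A x a y pa py"

definition Op :: "nat \<Rightarrow> (real \<Rightarrow> real) \<Rightarrow> (real \<Rightarrow> real) \<Rightarrow> real \<Rightarrow> real" where
  "Op m F u a = (\<Sum>s=0..m. (deriv ^^ (m-s)) F a / fact (m-s) * (1 / pochhammer (1/2) s) * (deriv ^^ s) u a)"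

end

theory Submission
  imports Defs
begin


definition fF :: "(nat \<Rightarrow> real) \<Rightarrow> nat \<Rightarrow> nat \<Rightarrow> real \<Rightarrow> real" where
  "fF A n m a = (\<Sum>j\<le>n. A j * of_nat (j choose m) * a^(j-m))"

lemma choose_absorb: "real (j - m) * real (j choose m) = real (Suc m) * real (j choose Suc m)"
proof -
  have "(j - m) * (j choose m) = Suc m * (j choose Suc m)"
    by (metis binomial_absorb_comp binomial_absorption)
  then show ?thesis by (metis of_nat_mult)
qed

lemma fF_deriv: "(fF A n m has_real_derivative of_nat (Suc m) * fF A n (Suc m) a) (at a)"
proof -
  have "((\<lambda>a. \<Sum>j\<le>n. A j * of_nat (j choose m) * a^(j-m)) has_real_derivative
     (\<Sum>j\<le>n. A j * of_nat (j choose m) * (of_nat (j-m) * a^(j-m-1)))) (at a)"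
    by (auto intro!: derivative_eq_intros sum.cong simp: ac_simps)
  moreover have "(\<Sum>j\<le>n. A j * of_nat (j choose m) * (of_nat (j-m) * a^(j-m-1)))
      = of_nat (Suc m) * fF A n (Suc m) a"
    unfolding fF_def sum_distrib_left
  proof (rule sum.cong[OF refl])
    fix j
    have "A j * real (j choose m) * (real (j - m) * a ^ (j - m - 1))
        = A j * (real (j - m) * real (j choose m)) * a ^ (j - Suc m)" by simp
    also have "\<dots> = real (Suc m) * (A j * real (j choose Suc m) * a ^ (j - Suc m))"
      by (simp only: choose_absorb) simp
    finally show "A j * real (j choose m) * (real (j - m) * a ^ (j - m - 1)) =
         real (Suc m) * (A j * real (j choose Suc m) * a ^ (j - Suc m))" .
  qed
  ultimately show ?thesis unfolding fF_def[abs_def] by simp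
qed

lemma F_higher: "(deriv ^^ m) (\<lambda>a. \<Sum>k\<le>n. A k * a ^ k) = (\<lambda>a. fact m * fF A n m a)"
proof (induction m)
  case 0
  then show ?case by (simp add: fF_def)
next
  case (Suc m)
  show ?case
  proof
    fix a
    have "((\<lambda>a. fact m * fF A n m a) has_real_derivative fact m * (of_nat (Suc m) * fF A n (Suc m) a)) (at a)"
      by (intro DERIV_cmult fF_deriv)
    then have "deriv (\<lambda>a. fact m * fF A n m a) a = fact (Suc m) * fF A n (Suc m) a"
      by (simp add: DERIV_imp_deriv algebra_simps)
    then show "(deriv ^^ Suc m) (\<lambda>a. \<Sum>k\<le>n. A k * a ^ k) a = fact (Suc m) * fF A n (Suc m) a"
      using Suc by simp
  qed
qed

lemma fF_top: assumes "A n = 1" shows "fF A n n a = 1"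
proof -
  have "fF A n n a = (\<Sum>j\<le>n. if j = n then 1 else 0)"
    unfolding fF_def by (rule sum.cong) (auto simp: assms)
  then show ?thesis by simp
qed

lemma G_expand:
  fixes u v a :: real
  shows "(\<Sum>j\<le>n. A j * (u + a * v)^j * v^(n-j)) = (\<Sum>m\<le>n. fF A n m a * u^m * v^(n-m))"
proof -
  have "(\<Sum>j\<le>n. A j * (u + a * v)^j * v^(n-j)) = (\<Sum>j\<le>n. \<Sum>m\<le>n. A j * of_nat (j choose m) * a^(j-m) * u^m * v^(n-m))"
  proof (rule sum.cong[OF refl])
    fix j assume j: "j \<in> {..n}"
    have "(u + a * v)^j = (\<Sum>m\<le>j. of_nat (j choose m) * u^m * (a * v)^(j-m))"
      by (rule binomial_ring)
    also have "\<dots> = (\<Sum>m\<le>n. of_nat (j choose m) * u^m * (a * v)^(j-m))"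
      using j by (intro sum.mono_neutral_left) auto
    finally have "A j * (u + a * v)^j * v^(n-j) = (\<Sum>m\<le>n. A j * (of_nat (j choose m) * u^m * (a * v)^(j-m)) * v^(n-j))"
      by (simp add: sum_distrib_left sum_distrib_right)
    also have "\<dots> = (\<Sum>m\<le>n. A j * of_nat (j choose m) * a^(j-m) * u^m * v^(n-m))"
    proof (rule sum.cong[OF refl])
      fix m assume m: "m \<in> {..n}"
      show "A j * (of_nat (j choose m) * u^m * (a * v)^(j-m)) * v^(n-j) = A j * of_nat (j choose m) * a^(j-m) * u^m * v^(n-m)"
      proof (cases "m \<le> j")
        case True
        then have "v^(n-m) = v^(j-m) * v^(n-j)" using j by (simp add: power_add[symmetric])
        then show ?thesis by (simp add: power_mult_distrib)
      next
        case False then show ?thesis by simp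
      qed
    qed
    finally show "A j * (u + a * v)^j * v^(n-j) = (\<Sum>m\<le>n. A j * of_nat (j choose m) * a^(j-m) * u^m * v^(n-m))" .
  qed
  also have "\<dots> = (\<Sum>m\<le>n. \<Sum>j\<le>n. A j * of_nat (j choose m) * a^(j-m) * u^m * v^(n-m))"
    by (rule sum.swap)
  also have "\<dots> = (\<Sum>m\<le>n. fF A n m a * u^m * v^(n-m))"
    unfolding fF_def by (simp add: sum_distrib_right)
  finally show ?thesis .
qed



lemma bracket_derivs:
  fixes x :: "real \<Rightarrow> real" and b :: "nat \<Rightarrow> real \<Rightarrow> real" and a y pa py D E :: real
  assumes dd: "(deriv x has_real_derivative E) (at a)" and D: "D = deriv x a" "D \<noteq> 0"
    and db: "\<And>k. k \<in> {1..n} \<Longrightarrow> (b k has_real_derivative db k) (at a)"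
  defines "w \<equiv> a / D" and "W' \<equiv> (D - a * E) / (D * D)" and "P \<equiv> a / D * pa"
  defines "HH \<equiv> P^2 + a * py^2"
  shows "((\<lambda>t. H_fun x t y pa py) has_real_derivative 2 * P * (W' * pa) + py^2) (at a)"
    and "((\<lambda>t. H_fun x a y t py) has_real_derivative 2 * P * w) (at pa)"
    and "((\<lambda>t. H_fun x a y pa t) has_real_derivative 2 * a * py) (at py)"
    and "((\<lambda>t. S1_fun n A b x a y t py) has_real_derivative
          (\<Sum>k=1..n. b k a * (real (2*k-1) * P^(2*k-1-1) * w) * py^(2*(n-k)+1))
          + y * (\<Sum>j\<le>n. A j * (real j * HH^(j-1) * (2 * P * w)) * py^(2*(n-j)))) (at pa)"
    and "((\<lambda>t. S1_fun n A b x t y pa py) has_real_derivative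
          (\<Sum>k=1..n. (db k * P^(2*k-1) + b k a * (real (2*k-1) * P^(2*k-1-1) * (W' * pa))) * py^(2*(n-k)+1))
          + y * (\<Sum>j\<le>n. A j * (real j * HH^(j-1) * (2 * P * (W' * pa) + py^2)) * py^(2*(n-j)))) (at a)"
    and "((\<lambda>t. S1_fun n A b x a t pa py) has_real_derivative G_fun n A x a y pa py) (at y)"
proof -
  have dw: "((\<lambda>t. t / deriv x t) has_real_derivative W') (at a)"
    using DERIV_divide[OF DERIV_ident dd] D unfolding W'_def by simp
  have dP: "((\<lambda>t. t / deriv x t * pa) has_real_derivative W' * pa) (at a)"
    using DERIV_cmult_right[OF dw] .
  show "((\<lambda>t. H_fun x t y pa py) has_real_derivative 2 * P * (W' * pa) + py^2) (at a)"
  proof -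
    have g: "((\<lambda>t. (q t)^2 + t * py^2) has_real_derivative 2 * q a * dq + py^2) (at a)"
      if "(q has_real_derivative dq) (at a)" for q dq
      by (auto intro!: derivative_eq_intros that)
    show ?thesis using g[OF dP] unfolding H_fun_def Pi_fun_def P_def by (simp add: D(1)[symmetric] D(2))
  qed
  show "((\<lambda>t. H_fun x a y t py) has_real_derivative 2 * P * w) (at pa)"
    unfolding H_fun_def Pi_fun_def P_def w_def
    by (auto intro!: derivative_eq_intros simp: D(1)[symmetric] D(2))
  show "((\<lambda>t. H_fun x a y pa t) has_real_derivative 2 * a * py) (at py)"
    unfolding H_fun_def Pi_fun_def P_def w_def
    by (auto intro!: derivative_eq_intros simp: D(1)[symmetric] D(2))
  show "((\<lambda>t. S1_fun n A b x a y t py) has_real_derivative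
          (\<Sum>k=1..n. b k a * (real (2*k-1) * P^(2*k-1-1) * w) * py^(2*(n-k)+1))
          + y * (\<Sum>j\<le>n. A j * (real j * HH^(j-1) * (2 * P * w)) * py^(2*(n-j)))) (at pa)"
    unfolding S1_fun_def Q1_fun_def G_fun_def H_fun_def Pi_fun_def P_def w_def HH_def
    by (auto intro!: derivative_eq_intros sum.cong simp: D(1)[symmetric] D(2) ac_simps)
  show "((\<lambda>t. S1_fun n A b x t y pa py) has_real_derivative
          (\<Sum>k=1..n. (db k * P^(2*k-1) + b k a * (real (2*k-1) * P^(2*k-1-1) * (W' * pa))) * py^(2*(n-k)+1))
          + y * (\<Sum>j\<le>n. A j * (real j * HH^(j-1) * (2 * P * (W' * pa) + py^2)) * py^(2*(n-j)))) (at a)"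
  proof -
    have g: "((\<lambda>t. (\<Sum>k=1..n. b k t * (q t)^(2*k-1) * py^(2*(n-k)+1))
          + y * (\<Sum>j\<le>n. A j * ((q t)^2 + t * py^2)^j * py^(2*(n-j)))) has_real_derivative
          (\<Sum>k=1..n. (db k * (q a)^(2*k-1) + b k a * (real (2*k-1) * (q a)^(2*k-1-1) * dq)) * py^(2*(n-k)+1))
          + y * (\<Sum>j\<le>n. A j * (real j * ((q a)^2 + a * py^2)^(j-1) * (2 * q a * dq + py^2)) * py^(2*(n-j)))) (at a)"
      if "(q has_real_derivative dq) (at a)" for q dq
      by (auto intro!: derivative_eq_intros sum.cong that db simp: algebra_simps)
    show ?thesis using g[OF dP] unfolding S1_fun_def Q1_fun_def G_fun_def H_fun_def Pi_fun_def P_def HH_def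
      by (simp add: D(1)[symmetric] D(2))
  qed
  show "((\<lambda>t. S1_fun n A b x a t pa py) has_real_derivative G_fun n A x a y pa py) (at y)"
    unfolding S1_fun_def Q1_fun_def G_fun_def H_fun_def
    by (auto intro!: derivative_eq_intros)
qed

lemma Q1_reindex:
  fixes P py :: real
  shows "(\<Sum>k=1..n. real (2*k-1) * bb k * P^(2*k-2) * py^(2*(n-k)+3))
       = py * (\<Sum>m\<le>n. (if m < n then real (2*m+1) * bb (Suc m) else 0) * (P^2)^m * (py^2)^(n-m))"
proof -
  have "(\<Sum>k=1..n. real (2*k-1) * bb k * P^(2*k-2) * py^(2*(n-k)+3))
     = (\<Sum>m<n. real (2*Suc m-1) * bb (Suc m) * P^(2*Suc m-2) * py^(2*(n-Suc m)+3))"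
    by (simp add: sum.atLeast1_atMost_eq)
  also have "\<dots> = (\<Sum>m<n. py * ((if m < n then real (2*m+1) * bb (Suc m) else 0) * (P^2)^m * (py^2)^(n-m)))"
  proof (rule sum.cong[OF refl])
    fix m assume "m \<in> {..<n}"
    then have e: "2*(n-Suc m)+3 = Suc (2*(n-m))" by auto
    have pe: "py^(2*(n-Suc m)+3) = py * (py^2)^(n-m)"
      unfolding e by (simp add: power_mult)
    then show "real (2*Suc m-1) * bb (Suc m) * P^(2*Suc m-2) * py^(2*(n-Suc m)+3)
      = py * ((if m < n then real (2*m+1) * bb (Suc m) else 0) * (P^2)^m * (py^2)^(n-m))"
      using \<open>m \<in> {..<n}\<close> by (simp only: pe) (simp add: power_mult)
  qed
  also have "\<dots> = (\<Sum>m\<le>n. py * ((if m < n then real (2*m+1) * bb (Suc m) else 0) * (P^2)^m * (py^2)^(n-m)))"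
    by (intro sum.mono_neutral_left) auto
  finally show ?thesis by (simp add: sum_distrib_left)
qed

lemma Q2_reindex:
  fixes P py :: real
  shows "(\<Sum>k=1..n. 2 * dd k * P^(2*k) * py^(2*(n-k)+1))
       = py * (\<Sum>m\<le>n. (if 1 \<le> m then 2 * dd m else 0) * (P^2)^m * (py^2)^(n-m))"
proof -
  have "(\<Sum>k=1..n. 2 * dd k * P^(2*k) * py^(2*(n-k)+1))
    = (\<Sum>m=1..n. py * ((if 1 \<le> m then 2 * dd m else 0) * (P^2)^m * (py^2)^(n-m)))"
    by (rule sum.cong[OF refl]) (simp add: power_mult)
  also have "\<dots> = (\<Sum>m\<le>n. py * ((if 1 \<le> m then 2 * dd m else 0) * (P^2)^m * (py^2)^(n-m)))"
    by (intro sum.mono_neutral_left) auto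
  finally show ?thesis by (simp add: sum_distrib_left)
qed



lemma bracket:
  fixes x :: "real \<Rightarrow> real" and b :: "nat \<Rightarrow> real \<Rightarrow> real" and a y pa py D E :: real
  assumes dd: "(deriv x has_real_derivative E) (at a)" and D: "D = deriv x a" "D \<noteq> 0"
    and db: "\<And>k. k \<in> {1..n} \<Longrightarrow> (b k has_real_derivative db k) (at a)"
  shows "poisson (H_fun x) (S1_fun n A b x) a y pa py = py * (\<Sum>m\<le>n.
     ((a / D) * ((if m < n then real (2*m+1) * b (Suc m) a else 0) - (if 1 \<le> m then 2 * db m else 0))
       - 2 * a * fF A n m a) * ((a / D * pa)^2)^m * (py^2)^(n-m))"
proof -
  define w where "w = a / D"
  define W' where "W' = (D - a * E) / (D * D)"
  define P where "P = a / D * pa"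
  define HH where "HH = P^2 + a * py^2"
  note ds1 = bracket_derivs(1)[where x=x and E=E and a=a and D=D and n=n and b=b and db=db and y=y and pa=pa and py=py, OF dd D db, folded P_def, folded HH_def, folded w_def W'_def]
  note ds2 = bracket_derivs(2)[where x=x and E=E and a=a and D=D and n=n and b=b and db=db and y=y and pa=pa and py=py, OF dd D db, folded P_def, folded HH_def, folded w_def W'_def]
  note ds3 = bracket_derivs(3)[where x=x and E=E and a=a and D=D and n=n and b=b and db=db and y=y and pa=pa and py=py, OF dd D db, folded P_def, folded HH_def, folded w_def W'_def]
  note ds4 = bracket_derivs(4)[where x=x and E=E and a=a and D=D and n=n and b=b and db=db and y=y and pa=pa and py=py and A=A, OF dd D db, folded P_def, folded HH_def, folded w_def W'_def]
  note ds5 = bracket_derivs(5)[where x=x and E=E and a=a and D=D and n=n and b=b and db=db and y=y and pa=pa and py=py and A=A, OF dd D db, folded P_def, folded HH_def, folded w_def W'_def]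
  note ds6 = bracket_derivs(6)[where x=x and E=E and a=a and D=D and n=n and b=b and db=db and y=y and pa=pa and py=py and A=A, OF dd D db, folded P_def, folded HH_def, folded w_def W'_def]
  define h1 where "h1 = 2 * P * (W' * pa) + py^2"
  define h2 where "h2 = 2 * P * w"
  define \<alpha> where "\<alpha> k = b k a * (real (2*k-1) * P^(2*k-1-1) * w) * py^(2*(n-k)+1)" for k
  define \<gamma> where "\<gamma> k = (db k * P^(2*k-1) + b k a * (real (2*k-1) * P^(2*k-1-1) * (W' * pa))) * py^(2*(n-k)+1)" for k
  define \<beta> where "\<beta> j = A j * (real j * HH^(j-1) * (2 * P * w)) * py^(2*(n-j))" for j
  define \<delta> where "\<delta> j = A j * (real j * HH^(j-1) * (2 * P * (W' * pa) + py^2)) * py^(2*(n-j))" for j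
  have e1: "deriv (\<lambda>t. H_fun x t y pa py) a = h1" using DERIV_imp_deriv[OF ds1] h1_def by simp
  have e2: "deriv (\<lambda>t. H_fun x a y t py) pa = h2" using DERIV_imp_deriv[OF ds2] h2_def by simp
  have e3: "deriv (\<lambda>t. H_fun x a t pa py) y = 0" unfolding H_fun_def by simp
  have e4: "deriv (\<lambda>t. H_fun x a y pa t) py = 2 * a * py" using DERIV_imp_deriv[OF ds3] by simp
  have e5: "deriv (\<lambda>t. S1_fun n A b x a y t py) pa = sum \<alpha> {1..n} + y * sum \<beta> {..n}"
    using DERIV_imp_deriv[OF ds4] unfolding \<alpha>_def \<beta>_def by simp
  have e6: "deriv (\<lambda>t. S1_fun n A b x t y pa py) a = sum \<gamma> {1..n} + y * sum \<delta> {..n}"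
    using DERIV_imp_deriv[OF ds5] unfolding \<gamma>_def \<delta>_def by simp
  have e7: "deriv (\<lambda>t. S1_fun n A b x a t pa py) y = G_fun n A x a y pa py"
    using DERIV_imp_deriv[OF ds6] by simp
  have "poisson (H_fun x) (S1_fun n A b x) a y pa py
      = h1 * (sum \<alpha> {1..n} + y * sum \<beta> {..n}) - h2 * (sum \<gamma> {1..n} + y * sum \<delta> {..n})
        - 2 * a * py * G_fun n A x a y pa py"
    unfolding poisson_def e1 e2 e3 e4 e5 e6 e7 by simp
  also have "h1 * (sum \<alpha> {1..n} + y * sum \<beta> {..n}) - h2 * (sum \<gamma> {1..n} + y * sum \<delta> {..n})
      = (\<Sum>k=1..n. h1 * \<alpha> k - h2 * \<gamma> k) + y * (\<Sum>j\<le>n. h1 * \<beta> j - h2 * \<delta> j)"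
    by (simp add: sum_subtractf sum_distrib_left algebra_simps)
  also have "(\<Sum>j\<le>n. h1 * \<beta> j - h2 * \<delta> j) = 0"
    by (rule sum.neutral) (simp add: h1_def h2_def \<beta>_def \<delta>_def algebra_simps)
  also have "(\<Sum>k=1..n. h1 * \<alpha> k - h2 * \<gamma> k)
     = w * ((\<Sum>k=1..n. real (2*k-1) * b k a * P^(2*k-2) * py^(2*(n-k)+3))
           - (\<Sum>k=1..n. 2 * db k * P^(2*k) * py^(2*(n-k)+1)))"
    unfolding sum_subtractf[symmetric] sum_distrib_left
  proof (rule sum.cong[OF refl])
    fix k assume "k \<in> {1..n}"
    then obtain k' where k: "k = Suc k'" by (cases k) auto
    show "h1 * \<alpha> k - h2 * \<gamma> k = w * (real (2*k-1) * b k a * P^(2*k-2) * py^(2*(n-k)+3)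
           - 2 * db k * P^(2*k) * py^(2*(n-k)+1))"
    proof -
      have q1: "P^(2*k-1-1) = P^(2*k')" and q2: "P^(2*k-1) = P * P^(2*k')"
        and q3: "P^(2*k) = P * P * P^(2*k')" and q5: "real (2*k-1) = 2 * real k' + 1" and q0: "P^(2*k-2) = P^(2*k')"
        unfolding k by auto
      have q4: "py^(2*(n-k)+3) = py * py * py^(2*(n-k)+1)" by (simp add: numeral_eq_Suc)
      show ?thesis
        unfolding h1_def h2_def \<alpha>_def \<gamma>_def q0 q1 q2 q3 q4 q5
        by (simp add: algebra_simps power2_eq_square)
    qed
  qed
  also note Q1_reindex[where n=n and bb="\<lambda>k. b k a" and P=P and py=py]
  also note Q2_reindex[where n=n and dd=db and P=P and py=py]
  also have "G_fun n A x a y pa py = (\<Sum>m\<le>n. fF A n m a * (P^2)^m * (py^2)^(n-m))"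
  proof -
    have "G_fun n A x a y pa py = (\<Sum>j\<le>n. A j * (P^2 + a * py^2)^j * (py^2)^(n-j))"
      unfolding G_fun_def H_fun_def Pi_fun_def P_def D(1) by (simp add: power_mult)
    then show ?thesis by (simp add: G_expand)
  qed
  finally show ?thesis unfolding P_def[symmetric] unfolding w_def[symmetric]
    by (simp add: sum_distrib_left sum_subtractf[symmetric] algebra_simps)
qed



definition RR :: "(nat \<Rightarrow> real) \<Rightarrow> nat \<Rightarrow> (real \<Rightarrow> real) \<Rightarrow> nat \<Rightarrow> real \<Rightarrow> real" where
  "RR A n x m a = (\<Sum>s=1..m. fF A n (m-s) a * ((deriv ^^ s) x a / pochhammer (1/2) s))"

definition DR :: "(nat \<Rightarrow> real) \<Rightarrow> nat \<Rightarrow> (real \<Rightarrow> real) \<Rightarrow> nat \<Rightarrow> real \<Rightarrow> real" where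
  "DR A n x m a = (\<Sum>s=1..m. (real (Suc (m-s)) * fF A n (Suc (m-s)) a * (deriv ^^ s) x a
      + fF A n (m-s) a * (deriv ^^ Suc s) x a) / pochhammer (1/2) s)"

lemma RR_deriv:
  assumes "\<And>s. ((deriv ^^ s) x has_real_derivative (deriv ^^ Suc s) x a) (at a)"
  shows "(RR A n x m has_real_derivative DR A n x m a) (at a)"
proof -
  have "((\<lambda>a. \<Sum>s=1..m. fF A n (m-s) a * ((deriv ^^ s) x a / pochhammer (1/2) s)) has_real_derivative
     (\<Sum>s=1..m. real (Suc (m-s)) * fF A n (Suc (m-s)) a * ((deriv ^^ s) x a / pochhammer (1/2) s)
       + fF A n (m-s) a * ((deriv ^^ Suc s) x a / pochhammer (1/2) s))) (at a)"
  proof (intro DERIV_sum)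
    fix s
    have g: "((deriv ^^ s) x has_real_derivative deriv ((deriv ^^ s) x) a) (at a)"
      using assms[of s] by simp
    show "((\<lambda>a. fF A n (m-s) a * ((deriv ^^ s) x a / pochhammer (1/2) s)) has_real_derivative
       real (Suc (m-s)) * fF A n (Suc (m-s)) a * ((deriv ^^ s) x a / pochhammer (1/2) s)
       + fF A n (m-s) a * ((deriv ^^ Suc s) x a / pochhammer (1/2) s)) (at a)"
      using pochhammer_pos[of "1/2::real" s]
      by (auto intro!: derivative_eq_intros g fF_deriv simp: field_simps)
  qed
  moreover have "(\<Sum>s=1..m. real (Suc (m-s)) * fF A n (Suc (m-s)) a * ((deriv ^^ s) x a / pochhammer (1/2) s)
       + fF A n (m-s) a * ((deriv ^^ Suc s) x a / pochhammer (1/2) s)) = DR A n x m a"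
    unfolding DR_def by (rule sum.cong) (simp_all add: add_divide_distrib)
  ultimately show ?thesis unfolding RR_def[abs_def] by simp
qed



lemma RR_one: "RR A n x 1 a = 2 * deriv x a * fF A n 0 a"
  unfolding RR_def by simp

lemma RR_rec:
  assumes m: "m \<ge> 1"
  shows "real (2*m+1) * RR A n x (Suc m) a = 2 * DR A n x m a + 2 * deriv x a * fF A n m a"
proof -
  define p where "p t = pochhammer (1/2::real) t" for t
  define g where "g t = (deriv ^^ t) x a" for t
  define \<phi> where "\<phi> j = fF A n j a" for j
  have pp: "p t > 0" for t unfolding p_def by (rule pochhammer_pos) simp
  have pS: "p (Suc t) = (1/2 + real t) * p t" for t unfolding p_def by (simp add: pochhammer_rec')
  have DR: "DR A n x m a = (\<Sum>s=1..m. real (Suc (m-s)) * \<phi> (Suc (m-s)) * g s / p s)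
       + (\<Sum>s=1..m. \<phi> (m-s) * g (Suc s) / p s)"
    unfolding DR_def p_def g_def \<phi>_def by (simp add: add_divide_distrib sum.distrib)
  have B: "(\<Sum>s=1..m. real (Suc (m-s)) * \<phi> (Suc (m-s)) * g s / p s)
     = (\<Sum>t=1..Suc m. if t \<le> m then real (Suc m - t) * \<phi> (Suc m - t) * g t / p t else 0)"
  proof -
    have "(\<Sum>t=1..Suc m. if t \<le> m then real (Suc m - t) * \<phi> (Suc m - t) * g t / p t else 0)
      = (\<Sum>t=1..m. if t \<le> m then real (Suc m - t) * \<phi> (Suc m - t) * g t / p t else 0)"
      by (simp add: sum.cl_ivl_Suc)
    also have "\<dots> = (\<Sum>s=1..m. real (Suc (m-s)) * \<phi> (Suc (m-s)) * g s / p s)"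
      by (rule sum.cong) (auto simp: Suc_diff_le)
    finally show ?thesis by simp
  qed
  have C: "(\<Sum>s=1..m. \<phi> (m-s) * g (Suc s) / p s)
     = (\<Sum>t=1..Suc m. if 2 \<le> t then \<phi> (Suc m - t) * g t / p (t - 1) else 0)"
  proof -
    have "(\<Sum>s=1..m. \<phi> (m-s) * g (Suc s) / p s) = (\<Sum>s=1..m. (\<lambda>t. \<phi> (Suc m - t) * g t / p (t - 1)) (Suc s))"
      by simp
    also have "\<dots> = (\<Sum>t=Suc 1..Suc m. \<phi> (Suc m - t) * g t / p (t - 1))"
      by (rule sum.shift_bounds_cl_Suc_ivl[symmetric])
    also have "\<dots> = (\<Sum>t=Suc 1..Suc m. if 2 \<le> t then \<phi> (Suc m - t) * g t / p (t - 1) else 0)"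
      by (rule sum.cong) auto
    also have "\<dots> = (\<Sum>t=1..Suc m. if 2 \<le> t then \<phi> (Suc m - t) * g t / p (t - 1) else 0)"
      by (subst sum.atLeast_Suc_atMost[of 1 "Suc m"]) simp_all
    finally show ?thesis .
  qed
  have D: "2 * deriv x a * fF A n m a = (\<Sum>t=1..Suc m. if t = 1 then 2 * \<phi> (Suc m - t) * g t else 0)"
    using m by (simp add: g_def \<phi>_def)
  have E: "RR A n x (Suc m) a = (\<Sum>t=1..Suc m. \<phi> (Suc m - t) * g t / p t)"
    unfolding RR_def p_def g_def \<phi>_def by (simp add: mult.commute)
  have T: "real (2*m+1) * (\<phi> (Suc m - t) * g t / p t)
     = 2 * (if t \<le> m then real (Suc m - t) * \<phi> (Suc m - t) * g t / p t else 0)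
     + 2 * (if 2 \<le> t then \<phi> (Suc m - t) * g t / p (t - 1) else 0)
     + (if t = 1 then 2 * \<phi> (Suc m - t) * g t else 0)" if t: "t \<in> {1..Suc m}" for t
  proof -
    obtain t' where t': "t = Suc t'" using t by (cases t) auto
    define r where "r = inverse (p (Suc t'))"
    have "p t' > 0" by (rule pp)
    then have d1: "z / p (Suc t') = z * r" for z unfolding r_def by (simp add: divide_inverse)
    have d2: "z / p t' = z * ((1/2 + real t') * r)" for z
    proof -
      have nz: "1/2 + real t' \<noteq> 0" using of_nat_0_le_iff[of t'] by linarith
      have e: "(1/2 + real t') * r = inverse (p t')"
        unfolding r_def pS using nz by (simp add: mult.assoc[symmetric])
      show ?thesis by (subst e) (rule divide_inverse)
    qed
    have p0: "p 0 = 1" unfolding p_def by simp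
    show ?thesis
    proof (cases "t' = 0")
      case True
      then show ?thesis using m unfolding t' by (simp add: pS p0 field_simps of_nat_diff)
    next
      case False
      show ?thesis
      proof (cases "t' = m")
        case True
        then have h1: "\<not> Suc t' \<le> m" and h2: "Suc m - Suc t' = 0" and h3: "real m = real t'" by auto
        show ?thesis using False h1 h2 unfolding t' h3 apply (simp add: d1 d2 algebra_simps) using True by blast
      next
        case False2: False
        then have "t' < m" using t t' by auto
        then show ?thesis using False unfolding t'
          by (simp add: d1 d2 algebra_simps of_nat_diff)
      qed
    qed
  qed
  let ?X = "\<lambda>t. if t \<le> m then real (Suc m - t) * \<phi> (Suc m - t) * g t / p t else 0"
  let ?Y = "\<lambda>t. if 2 \<le> t then \<phi> (Suc m - t) * g t / p (t - 1) else 0"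
  let ?Z = "\<lambda>t. if t = 1 then 2 * \<phi> (Suc m - t) * g t else 0"
  have "real (2*m+1) * RR A n x (Suc m) a = (\<Sum>t=1..Suc m. real (2*m+1) * (\<phi> (Suc m - t) * g t / p t))"
    unfolding E sum_distrib_left ..
  also have "\<dots> = (\<Sum>t=1..Suc m. 2 * ?X t + 2 * ?Y t + ?Z t)"
    by (rule sum.cong[OF refl]) (rule T)
  also have "\<dots> = 2 * sum ?X {1..Suc m} + 2 * sum ?Y {1..Suc m} + sum ?Z {1..Suc m}"
    by (simp add: sum.distrib sum_distrib_left)
  finally show ?thesis unfolding DR B C D by simp
qed



lemma Op_split:
  "Op m (\<lambda>a. \<Sum>k\<le>n. A k * a ^ k) u a = fF A n m a * u a
     + (\<Sum>s=1..m. fF A n (m-s) a * ((deriv ^^ s) u a / pochhammer (1/2) s))"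
proof -
  have "Op m (\<lambda>a. \<Sum>k\<le>n. A k * a ^ k) u a
      = (\<Sum>s=0..m. fF A n (m-s) a * ((deriv ^^ s) u a / pochhammer (1/2) s))"
    unfolding Op_def F_higher by (rule sum.cong) auto
  also have "\<dots> = fF A n m a * u a + (\<Sum>s=1..m. fF A n (m-s) a * ((deriv ^^ s) u a / pochhammer (1/2) s))"
    by (subst sum.atLeast_Suc_atMost) auto
  finally show ?thesis .
qed

lemma formula_RR:
  "(\<Sum>s=1..k. (deriv ^^ (k-s)) (\<lambda>a. \<Sum>k\<le>n. A k * a ^ k) a / fact (k-s) * ((deriv ^^ s) x a / pochhammer (1/2) s))
    = RR A n x k a"
  unfolding F_higher RR_def by simp

lemma shift_derivs:
  fixes x :: "real \<Rightarrow> real" and c :: real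
  assumes I: "open I" and sx: "\<forall>k. \<forall>t\<in>I. ((deriv ^^ k) x) field_differentiable (at t)"
  shows "\<forall>t\<in>I. (deriv ^^ s) (\<lambda>t. x t + c) t = (deriv ^^ s) x t + (if s = 0 then c else 0)"
proof (induction s)
  case 0 then show ?case by simp
next
  case (Suc s)
  show ?case
  proof
    fix t assume t: "t \<in> I"
    have "((deriv ^^ s) x has_real_derivative deriv ((deriv ^^ s) x) t) (at t)"
      using sx t DERIV_deriv_iff_field_differentiable by blast
    then have "((\<lambda>t. (deriv ^^ s) x t + (if s = 0 then c else 0)) has_real_derivative deriv ((deriv ^^ s) x) t) (at t)"
      by (auto intro!: derivative_eq_intros)
    then have "((deriv ^^ s) (\<lambda>t. x t + c) has_real_derivative deriv ((deriv ^^ s) x) t) (at t)"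
      by (rule has_field_derivative_transform_within_open[OF _ I t]) (use Suc in auto)
    then show "(deriv ^^ Suc s) (\<lambda>t. x t + c) t = (deriv ^^ Suc s) x t + (if Suc s = 0 then c else 0)"
      by (simp add: DERIV_imp_deriv)
  qed
qed



lemma coeff_pointwise:
  fixes x :: "real \<Rightarrow> real" and b :: "nat \<Rightarrow> real \<Rightarrow> real" and a :: real
  assumes dd: "(deriv x has_real_derivative deriv (deriv x) a) (at a)" and D: "deriv x a \<noteq> 0" and apos: "a > 0"
    and db: "\<And>k. k \<in> {1..n} \<Longrightarrow> (b k has_real_derivative deriv (b k) a) (at a)"
  shows "(\<forall>y pa py. poisson (H_fun x) (S1_fun n A b x) a y pa py = 0) \<longleftrightarrow>
    (\<forall>m\<le>n. (if m < n then real (2*m+1) * b (Suc m) a else 0) - (if 1 \<le> m then 2 * deriv (b m) a else 0)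
        = 2 * deriv x a * fF A n m a)"
proof -
  define D where "D = deriv x a"
  define c where "c m = (a / D) * ((if m < n then real (2*m+1) * b (Suc m) a else 0) - (if 1 \<le> m then 2 * deriv (b m) a else 0))
       - 2 * a * fF A n m a" for m
  have br: "poisson (H_fun x) (S1_fun n A b x) a y pa py = py * (\<Sum>m\<le>n. c m * ((a / D * pa)^2)^m * (py^2)^(n-m))"
    for y pa py
    unfolding c_def by (rule bracket[OF dd D_def D[folded D_def] db])
  have ceq: "c m = 0 \<longleftrightarrow> (if m < n then real (2*m+1) * b (Suc m) a else 0) - (if 1 \<le> m then 2 * deriv (b m) a else 0)
        = 2 * D * fF A n m a" for m
  proof -
    have Dn: "D \<noteq> 0" using D unfolding D_def .
    let ?X = "(if m < n then real (2*m+1) * b (Suc m) a else 0) - (if 1 \<le> m then 2 * deriv (b m) a else 0)"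
    have "c m = (a / D) * (?X - 2 * D * fF A n m a)"
      unfolding c_def using Dn by (simp add: field_simps)
    moreover have "a / D \<noteq> 0" using Dn apos by simp
    ultimately show ?thesis by simp
  qed
  have "(\<forall>y pa py. poisson (H_fun x) (S1_fun n A b x) a y pa py = 0) \<longleftrightarrow> (\<forall>m\<le>n. c m = 0)"
  proof
    assume "\<forall>m\<le>n. c m = 0"
    then show "\<forall>y pa py. poisson (H_fun x) (S1_fun n A b x) a y pa py = 0"
      unfolding br by simp
  next
    assume H: "\<forall>y pa py. poisson (H_fun x) (S1_fun n A b x) a y pa py = 0"
    have "{0::real..} \<subseteq> {z. (\<Sum>i\<le>n. c i * z^i) = 0}"
    proof
      fix z :: real assume "z \<in> {0..}"
      then have z: "z \<ge> 0" by simp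
      have "(a / D * (sqrt z * D / a))^2 = z" using D apos z unfolding D_def[symmetric] by simp
      moreover have "poisson (H_fun x) (S1_fun n A b x) a 0 (sqrt z * D / a) 1 = 0" using H by blast
      ultimately show "z \<in> {z. (\<Sum>i\<le>n. c i * z^i) = 0}" unfolding br by simp
    qed
    then have "\<not> finite {z. (\<Sum>i\<le>n. c i * z^i) = 0}"
      using infinite_Ici finite_subset by blast
    then show "\<forall>m\<le>n. c m = 0" using polyfun_finite_roots[of c n] by blast
  qed
  then show ?thesis using ceq unfolding D_def by simp
qed



theorem proposition5:
  fixes n :: nat and A :: "nat \<Rightarrow> real" and I :: "real set"
    and x :: "real \<Rightarrow> real" and b :: "nat \<Rightarrow> real \<Rightarrow> real"
  assumes "n \<ge> 2" and "A n = 1"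
    and "open I" and "is_interval I" and "I \<subseteq> {0<..}"
    and "smooth_real_on I x" and "\<forall>a\<in>I. deriv x a \<noteq> 0"
    and "\<forall>k\<in>{1..n}. smooth_real_on I (b k)"
  defines "F \<equiv> (\<lambda>a. \<Sum>k\<le>n. A k * a ^ k)"
  shows "(\<forall>a\<in>I. \<forall>y pa py. poisson (H_fun x) (S1_fun n A b x) a y pa py = 0) \<longleftrightarrow>
    ((\<forall>k\<in>{1..n}. \<forall>a\<in>I.
        b k a = (\<Sum>s=1..k. (deriv ^^ (k-s)) F a / fact (k-s) * ((deriv ^^ s) x a / pochhammer (1/2) s))
      \<and> b k a = Op k F x a - (deriv ^^ k) F a / fact k * x a)
     \<and> (\<exists>c. \<forall>a\<in>I. Op n F (\<lambda>t. x t + c) a = 0))"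
proof -
  have n1: "n \<ge> 1" using assms(1) by simp
  have I: "open I" using assms(3) .
  have sx: "\<forall>k. \<forall>t\<in>I. ((deriv ^^ k) x) field_differentiable (at t)"
    using assms(6) unfolding smooth_real_on_def .
  have dxk: "((deriv ^^ k) x has_real_derivative (deriv ^^ Suc k) x t) (at t)" if "t \<in> I" for k t
    using sx that DERIV_deriv_iff_field_differentiable by fastforce
  have dx: "(x has_real_derivative deriv x t) (at t)" if "t \<in> I" for t
    using dxk[OF that, of 0] by simp
  have ddx: "(deriv x has_real_derivative deriv (deriv x) t) (at t)" if "t \<in> I" for t
    using dxk[OF that, of 1] by simp
  have dbk: "(b k has_real_derivative deriv (b k) t) (at t)" if "k \<in> {1..n}" "t \<in> I" for k t
  proof -
    have "(deriv ^^ 0) (b k) field_differentiable (at t)"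
      using assms(8) that unfolding smooth_real_on_def by blast
    then show ?thesis by (simp add: DERIV_deriv_iff_field_differentiable)
  qed
  have apos: "t > 0" if "t \<in> I" for t using assms(5) that by auto
  have Dnz: "deriv x t \<noteq> 0" if "t \<in> I" for t using assms(7) that by auto
  have RRd: "(RR A n x m has_real_derivative DR A n x m t) (at t)" if "t \<in> I" for m t
    by (rule RR_deriv) (rule dxk[OF that])
  have transfer: "deriv g t = DR A n x m t" if "t \<in> I" "\<forall>s\<in>I. g s = RR A n x m s" for g m t
  proof -
    have "(g has_real_derivative DR A n x m t) (at t)"
      by (rule has_field_derivative_transform_within_open[OF RRd[OF that(1)] I that(1)]) (use that(2) in auto)
    then show ?thesis by (rule DERIV_imp_deriv)
  qed
  define E where "E m t \<longleftrightarrow> (if m < n then real (2*m+1) * b (Suc m) t else 0) - (if 1 \<le> m then 2 * deriv (b m) t else 0)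
        = 2 * deriv x t * fF A n m t" for m t
  have L: "(\<forall>a\<in>I. \<forall>y pa py. poisson (H_fun x) (S1_fun n A b x) a y pa py = 0) \<longleftrightarrow> (\<forall>a\<in>I. \<forall>m\<le>n. E m a)"
  proof -
    have "(\<forall>y pa py. poisson (H_fun x) (S1_fun n A b x) a y pa py = 0) \<longleftrightarrow> (\<forall>m\<le>n. E m a)" if a: "a \<in> I" for a
      unfolding E_def by (rule coeff_pointwise[where n=n and A=A, OF ddx[OF a] Dnz[OF a] apos[OF a] dbk[OF _ a]])
    then show ?thesis by blast
  qed
  have Rk: "(b k a = (\<Sum>s=1..k. (deriv ^^ (k-s)) F a / fact (k-s) * ((deriv ^^ s) x a / pochhammer (1/2) s))
      \<and> b k a = Op k F x a - (deriv ^^ k) F a / fact k * x a) \<longleftrightarrow> b k a = RR A n x k a" for k a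
    unfolding F_def formula_RR Op_split unfolding F_higher RR_def by simp
  have Opn: "Op n F (\<lambda>t. x t + c) a = x a + c + RR A n x n a" if "a \<in> I" for c a
  proof -
    have "Op n F (\<lambda>t. x t + c) a = fF A n n a * (x a + c)
       + (\<Sum>s=1..n. fF A n (n-s) a * ((deriv ^^ s) (\<lambda>t. x t + c) a / pochhammer (1/2) s))"
      unfolding F_def Op_split ..
    also have "(\<Sum>s=1..n. fF A n (n-s) a * ((deriv ^^ s) (\<lambda>t. x t + c) a / pochhammer (1/2) s)) = RR A n x n a"
      unfolding RR_def using shift_derivs[OF I sx, of _ c] that by (intro sum.cong) auto
    finally show ?thesis using fF_top[where A=A and n=n, OF assms(2)] by simp
  qed
  have main: "(\<forall>a\<in>I. \<forall>m\<le>n. E m a) \<longleftrightarrow>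
     (\<forall>k\<in>{1..n}. \<forall>a\<in>I. b k a = RR A n x k a) \<and> (\<exists>c. \<forall>a\<in>I. x a + c + RR A n x n a = 0)"
  proof
    assume HE: "\<forall>a\<in>I. \<forall>m\<le>n. E m a"
    have bR: "1 \<le> k \<longrightarrow> k \<le> n \<longrightarrow> (\<forall>a\<in>I. b k a = RR A n x k a)" for k
    proof (induction k)
      case 0 then show ?case by simp
    next
      case (Suc k)
      show ?case
      proof (intro impI ballI)
        fix a assume k: "Suc k \<le> n" and a: "a \<in> I"
        show "b (Suc k) a = RR A n x (Suc k) a"
        proof (cases "k = 0")
          case True
          have "E 0 a" using HE a by blast
          then show ?thesis using True n1 unfolding E_def by (simp add: RR_one[unfolded One_nat_def] RR_one)
        next
          case False
          then have k1: "k \<ge> 1" by simp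
          have IH: "\<forall>a\<in>I. b k a = RR A n x k a" using Suc k k1 by simp
          have "E k a" using HE a k by simp
          then have e: "real (2*k+1) * b (Suc k) a - 2 * deriv (b k) a = 2 * deriv x a * fF A n k a"
            using k k1 unfolding E_def by simp
          have "deriv (b k) a = DR A n x k a" by (rule transfer[OF a IH])
          with e RR_rec[OF k1, of A n x a]
          have "real (2*k+1) * b (Suc k) a = real (2*k+1) * RR A n x (Suc k) a" by simp
          then show ?thesis by simp
        qed
      qed
    qed
    then have P1: "\<forall>k\<in>{1..n}. \<forall>a\<in>I. b k a = RR A n x k a" by auto
    have "\<exists>K. \<forall>t\<in>I. b n t + x t = K"
    proof (rule has_field_derivative_zero_constant)
      show "convex I" using assms(4) by (rule is_interval_convex)
    next
      fix t assume t: "t \<in> I"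
      have "E n t" using HE t by blast
      then have "deriv (b n) t = - deriv x t" using n1 fF_top[where A=A and n=n, OF assms(2)] unfolding E_def by simp
      then have "((\<lambda>t. b n t + x t) has_real_derivative 0) (at t)"
        using DERIV_add[OF dbk[of n t] dx[OF t]] t n1 by simp
      then show "((\<lambda>t. b n t + x t) has_real_derivative 0) (at t within I)"
        by (rule has_field_derivative_at_within)
    qed
    then obtain K where K: "\<forall>t\<in>I. b n t + x t = K" by blast
    have "\<forall>a\<in>I. x a + (-K) + RR A n x n a = 0"
      using K P1 n1 by fastforce
    then show "(\<forall>k\<in>{1..n}. \<forall>a\<in>I. b k a = RR A n x k a) \<and> (\<exists>c. \<forall>a\<in>I. x a + c + RR A n x n a = 0)"
      using P1 by blast
  next
    assume "(\<forall>k\<in>{1..n}. \<forall>a\<in>I. b k a = RR A n x k a) \<and> (\<exists>c. \<forall>a\<in>I. x a + c + RR A n x n a = 0)"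
    then obtain c where bR: "\<forall>k\<in>{1..n}. \<forall>a\<in>I. b k a = RR A n x k a"
      and cc: "\<forall>a\<in>I. x a + c + RR A n x n a = 0" by blast
    show "\<forall>a\<in>I. \<forall>m\<le>n. E m a"
    proof (intro ballI allI impI)
      fix a m assume a: "a \<in> I" and m: "m \<le> n"
      consider "m = 0" | "1 \<le> m" "m < n" | "m = n" using m n1 by linarith
      then show "E m a"
      proof cases
        case 1
        then show ?thesis using bR a n1 unfolding E_def by (simp add: RR_one[unfolded One_nat_def] RR_one)
      next
        case 2
        have IH: "\<forall>s\<in>I. b m s = RR A n x m s" using bR 2 by auto
        have "deriv (b m) a = DR A n x m a" by (rule transfer[OF a IH])
        moreover have "b (Suc m) a = RR A n x (Suc m) a" using bR 2 a by auto
        ultimately show ?thesis using RR_rec[OF 2(1), of A n x a] 2 unfolding E_def by simp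
      next
        case 3
        have bn: "\<forall>s\<in>I. b n s = - x s - c" using bR cc n1 by fastforce
        have "((\<lambda>s. - x s - c) has_real_derivative - deriv x a) (at a)"
          using DERIV_diff[OF DERIV_minus[OF dx[OF a]] DERIV_const[of c]] by simp
        then have "(b n has_real_derivative - deriv x a) (at a)"
          by (rule has_field_derivative_transform_within_open[OF _ I a]) (use bn in auto)
        then have "deriv (b n) a = - deriv x a" by (rule DERIV_imp_deriv)
        then show ?thesis using 3 n1 fF_top[where A=A and n=n, OF assms(2)] unfolding E_def by simp
      qed
    qed
  qed
  have eqOp: "(\<exists>c. \<forall>a\<in>I. Op n F (\<lambda>t. x t + c) a = 0) \<longleftrightarrow> (\<exists>c. \<forall>a\<in>I. x a + c + RR A n x n a = 0)"
    using Opn by simp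
  show ?thesis unfolding L main eqOp Rk by blast
qed

end
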